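(* Let $\mathbb{F}$ be a field, let $U$ and $U'$ be finite-dimensional $\mathbb{F}$-vector spaces with $\dim U>1$, and let $b$ be a symplectic form on $U'$. Let $\mathcal{V}\subseteq \operatorname{Hom}_{\mathbb{F}}(U,U')$ be a linear subspace such that the range of every element of $\mathcal{V}$ is totally $b$-singular. Then $$\dim\mathcal{V}\le \frac{(\dim U)(\dim U')}{2}.$$ Moreover, if $\dim U>2$ and $\dim\mathcal{V}=\frac{(\dim U)(\dim U')}{2}$, then $\mathcal{V}=\operatorname{Hom}_{\mathbb{F}}(U,\mathcal{L})$ for some Lagrangian $\mathcal{L}$ of $(U',b)$.
   Context: A symplectic form is a non-degenerate alternating bilinear form ($b(x,x)=0$ for all $x$). A subspace $W$ is totally $b$-singular if $b(x,y)=0$ for all $x,y\in W$. A Lagrangian of $(U',b)$ is a totally $b$-singular subspace of $U'$ of dimension $\frac{\dim U'}{2}$. *)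

theory Defs
  imports Complex_Main "HOL-Library.Function_Algebras"
begin

definition fin_dim_vs :: "('f::field \<Rightarrow> 'v::ab_group_add \<Rightarrow> 'v) \<Rightarrow> bool" where
  "fin_dim_vs scale \<longleftrightarrow> vector_space scale \<and>
     (\<exists>B. finite B \<and> module.span scale B = UNIV)"

definition hom_scale :: "('f \<Rightarrow> 'w \<Rightarrow> 'w) \<Rightarrow> 'f \<Rightarrow> ('u \<Rightarrow> 'w) \<Rightarrow> ('u \<Rightarrow> 'w)" where
  "hom_scale scaleW c f = (\<lambda>x. scaleW c (f x))"

definition Hom :: "('f::field \<Rightarrow> 'u::ab_group_add \<Rightarrow> 'u) \<Rightarrow> ('f \<Rightarrow> 'w::ab_group_add \<Rightarrow> 'w)
    \<Rightarrow> 'w set \<Rightarrow> ('u \<Rightarrow> 'w) set" where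
  "Hom scaleU scaleW W = {f. Vector_Spaces.linear scaleU scaleW f \<and> range f \<subseteq> W}"

definition bilinear_form :: "('f::field \<Rightarrow> 'w::ab_group_add \<Rightarrow> 'w) \<Rightarrow> ('w \<Rightarrow> 'w \<Rightarrow> 'f) \<Rightarrow> bool" where
  "bilinear_form scaleW b \<longleftrightarrow>
     (\<forall>x. Vector_Spaces.linear scaleW (*) (b x)) \<and>
     (\<forall>y. Vector_Spaces.linear scaleW (*) (\<lambda>x. b x y))"

definition symplectic_form :: "('f::field \<Rightarrow> 'w::ab_group_add \<Rightarrow> 'w) \<Rightarrow> ('w \<Rightarrow> 'w \<Rightarrow> 'f) \<Rightarrow> bool" where
  "symplectic_form scaleW b \<longleftrightarrow> bilinear_form scaleW b \<and>
     (\<forall>x. b x x = 0) \<and>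
     (\<forall>x. (\<forall>y. b x y = 0) \<longrightarrow> x = 0)"

definition totally_singular :: "('w \<Rightarrow> 'w \<Rightarrow> 'f::zero) \<Rightarrow> 'w set \<Rightarrow> bool" where
  "totally_singular b W \<longleftrightarrow> (\<forall>x\<in>W. \<forall>y\<in>W. b x y = 0)"

definition lagrangian :: "('f::field \<Rightarrow> 'w::ab_group_add \<Rightarrow> 'w) \<Rightarrow> ('w \<Rightarrow> 'w \<Rightarrow> 'f) \<Rightarrow> 'w set \<Rightarrow> bool" where
  "lagrangian scaleW b L \<longleftrightarrow> module.subspace scaleW L \<and> totally_singular b L \<and>
     2 * vector_space.dim scaleW L = vector_space.dim scaleW (UNIV :: 'w set)"

end

theory Submission
  imports Defs
begin

lemma vector_space_hom_scale:
  assumes "vector_space s"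
  shows "vector_space (hom_scale s)"
proof -
  interpret vector_space s by fact
  show ?thesis
    by unfold_locales (auto simp: hom_scale_def fun_eq_iff scale_right_distrib scale_left_distrib)
qed

lemma vector_space_mult: "vector_space ((*) :: 'f::field \<Rightarrow> 'f \<Rightarrow> 'f)"
  by unfold_locales (auto simp: algebra_simps)

context vector_space begin

lemma dim_mono_gen:
  assumes "S \<subseteq> T" "T \<subseteq> span F" "finite F"
  shows "dim S \<le> dim T"
proof -
  obtain B where B: "B \<subseteq> T" "independent B" "T \<subseteq> span B" "card B = dim T"
    using basis_exists by blast
  have "finite B" using independent_span_bound[OF assms(3) B(2)] B(1) assms(2) by auto
  have "dim S \<le> card B" using dim_le_card[of S B] B assms(1) \<open>finite B\<close> by auto
  thus ?thesis using B by simp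
qed

lemma dim_le_of_span:
  assumes "T \<subseteq> span F" "finite F"
  shows "dim T \<le> card F"
  using dim_le_card assms by blast

lemma subspace_eq_by_dim:
  assumes S: "subspace S" and ST: "S \<subseteq> T" and T: "T \<subseteq> span F" "finite F"
    and d: "dim T \<le> dim S"
  shows "T \<subseteq> S"
proof
  fix t assume t: "t \<in> T"
  show "t \<in> S"
  proof (rule ccontr)
    assume tS: "t \<notin> S"
    obtain B where B: "B \<subseteq> S" "independent B" "S \<subseteq> span B" "card B = dim S"
      using basis_exists by blast
    have spB: "span B = S" using B S by (metis span_subspace)
    have fB: "finite B" using independent_span_bound[OF T(2) B(2)] B(1) ST T(1) by auto
    have ind: "independent (insert t B)"
      using independent_insertI[of t B] B spB tS by auto
    have "t \<notin> B" using tS B(1) by auto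
    then have "card (insert t B) = dim S + 1" using fB B(4) by simp
    moreover have "card (insert t B) \<le> dim T"
    proof -
      have "insert t B \<subseteq> T" using t B ST by auto
      then have "dim (insert t B) \<le> dim T" using dim_mono_gen T by blast
      moreover have "dim (insert t B) = card (insert t B)" using dim_eq_card_independent ind by blast
      ultimately show ?thesis by simp
    qed
    ultimately show False using d by simp
  qed
qed

end

context vector_space_pair begin

lemma dim_image_eq_gen:
  assumes lf: "Vector_Spaces.linear s1 s2 f"
    and fi: "inj_on f (vs1.span S)"
  shows "vs2.dim (f ` S) = vs1.dim S"
proof -
  interpret lf: Vector_Spaces.linear s1 s2 f by fact
  obtain B where B: "B \<subseteq> S" "vs1.independent B" "S \<subseteq> vs1.span B" "card B = vs1.dim S"
    using vs1.basis_exists[of S] by auto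
  then have "vs1.span S = vs1.span B"
    using vs1.span_mono[of B S] vs1.span_mono[of S "vs1.span B"] vs1.span_span[of B] by auto
  moreover have "card (f ` B) = card B"
    using assms card_image[of f B] inj_on_subset[of f "vs1.span S" B] B vs1.span_superset by auto
  moreover have "(f ` B) \<subseteq> (f ` S)"
    using B by auto
  ultimately show ?thesis
    by (metis B(2) B(4) fi lf.dependent_inj_imageD lf.span_image vs2.dim_eq_card_independent vs2.dim_span)
qed

end

context vector_space begin
lemma span_disjoint_Int:
  assumes B: "independent B" and CB: "C \<subseteq> B" and DB: "D \<subseteq> B" and CD: "C \<inter> D = {}"
    and xC: "x \<in> span C" and xD: "x \<in> span D"
  shows "x = 0"
proof -
  have r1: "representation B x = representation C x" using representation_extend[OF B xC CB] .
  have r2: "representation B x = representation D x" using representation_extend[OF B xD DB] .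
  have z: "representation B x b = 0" for b
  proof (rule ccontr)
    assume "representation B x b \<noteq> 0"
    then have "representation C x b \<noteq> 0" "representation D x b \<noteq> 0" using r1 r2 by auto
    then have "b \<in> C" "b \<in> D" using representation_ne_zero by blast+
    thus False using CD by auto
  qed
  have xB: "x \<in> span B" using xC span_mono[OF CB] by auto
  have "x = (\<Sum>b | representation B x b \<noteq> 0. representation B x b *s b)"
    using sum_nonzero_representation_eq[OF B xB] by simp
  also have "\<dots> = 0" using z by simp
  finally show ?thesis .
qed
end

context vector_space_pair begin

lemma dim_le_image_kernel:
  assumes lf: "Vector_Spaces.linear s1 s2 f" and X: "vs1.subspace X" and XF: "X \<subseteq> vs1.span F" "finite F"
  shows "vs1.dim X \<le> vs2.dim (f ` X) + vs1.dim {x\<in>X. f x = 0}"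
proof -
  interpret lf: Vector_Spaces.linear s1 s2 f by fact
  define K where "K = {x\<in>X. f x = 0}"
  obtain BK where BK: "BK \<subseteq> K" "vs1.independent BK" "K \<subseteq> vs1.span BK" "card BK = vs1.dim K"
    using vs1.basis_exists by blast
  have "BK \<subseteq> X" using BK(1) K_def by auto
  then obtain B where B: "BK \<subseteq> B" "B \<subseteq> X" "vs1.independent B" "X \<subseteq> vs1.span B"
    using vs1.maximal_independent_subset_extend[OF _ BK(2)] by metis
  have "B \<subseteq> vs1.span F" using B(2) XF(1) by blast
  then have fB: "finite B" using vs1.independent_span_bound[OF XF(2) B(3)] by blast
  have cardB: "card B = vs1.dim X"
    using vs1.basis_card_eq_dim[OF B(2) B(4) B(3)] .
  define C where "C = B - BK"
  have "C \<subseteq> X" using C_def B(2) by blast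
  then have spC: "vs1.span C \<subseteq> X" using vs1.span_minimal[OF _ X] by blast
  have inj: "inj_on f (vs1.span C)"
    unfolding lf.inj_on_iff_eq_0[OF vs1.subspace_span]
  proof (intro ballI impI)
    fix x assume x: "x \<in> vs1.span C" "f x = 0"
    then have "x \<in> K" using spC K_def by auto
    then have "x \<in> vs1.span BK" using BK by auto
    moreover have "C \<subseteq> B" "C \<inter> BK = {}" using C_def by auto
    ultimately show "x = 0" using vs1.span_disjoint_Int[OF B(3) _ B(1) _ x(1)] by blast
  qed
  have "vs1.independent C" using vs1.independent_mono[OF B(3)] C_def by blast
  then have dC: "vs2.dim (f ` C) = card C"
    using dim_image_eq_gen[OF lf inj] vs1.dim_eq_card_independent[of C] by simp
  have "vs2.dim (f ` C) \<le> vs2.dim (f ` X)"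
  proof (rule vs2.dim_mono_gen[of _ _ "f ` B"])
    show "f ` C \<subseteq> f ` X" using C_def B(2) by auto
    show "f ` X \<subseteq> vs2.span (f ` B)" using lf.spans_image[OF B(4)] .
    show "finite (f ` B)" using fB by simp
  qed
  moreover have "card B = card C + card BK"
  proof -
    have "finite BK" using fB B(1) finite_subset by blast
    thus ?thesis using C_def fB B(1) card_Diff_subset[of BK B] card_mono[OF fB B(1)] by simp
  qed
  ultimately show ?thesis using cardB dC BK(4) K_def by simp
qed

end

lemma sum_fun_apply: "(\<Sum>i\<in>A. f i) x = (\<Sum>i\<in>A. f i x)"
  by (induct A rule: infinite_finite_induct) auto

locale sympl =
  fixes scaleW :: "'f::field \<Rightarrow> 'w::ab_group_add \<Rightarrow> 'w"
    and b :: "'w \<Rightarrow> 'w \<Rightarrow> 'f"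
  assumes W: "fin_dim_vs scaleW"
    and symp: "symplectic_form scaleW b"
begin

sublocale W: vector_space scaleW using W unfolding fin_dim_vs_def by auto

abbreviation "m \<equiv> W.dim (UNIV :: 'w set)"

lemma lin2: "Vector_Spaces.linear scaleW (*) (b x)"
  using symp unfolding symplectic_form_def bilinear_form_def by auto
lemma lin1: "Vector_Spaces.linear scaleW (*) (\<lambda>x. b x y)"
  using symp unfolding symplectic_form_def bilinear_form_def by auto
lemma alt: "b x x = 0"
  using symp unfolding symplectic_form_def by auto
lemma nondeg: "(\<And>y. b x y = 0) \<Longrightarrow> x = 0"
  using symp unfolding symplectic_form_def by auto

lemma b_add2: "b x (y + z) = b x y + b x z"
  using lin2[of x] unfolding Vector_Spaces.linear_iff by auto
lemma b_add1: "b (x + y) z = b x z + b y z"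
  using lin1[of z] unfolding Vector_Spaces.linear_iff by auto
lemma b_scale2: "b x (scaleW c y) = c * b x y"
  using lin2[of x] unfolding Vector_Spaces.linear_iff by auto
lemma b_scale1: "b (scaleW c x) y = c * b x y"
  using lin1[of y] unfolding Vector_Spaces.linear_iff by auto
lemma b_zero1[simp]: "b 0 y = 0"
  using b_scale1[of 0 0 y] by simp
lemma b_zero2[simp]: "b x 0 = 0"
  using b_scale2[of x 0 0] by simp
lemma b_skew: "b x y = - b y x"
proof -
  have "b (x + y) (x + y) = 0" by (rule alt)
  moreover have "b (x + y) (x + y) = (b x x + b x y) + (b y x + b y y)" by (simp add: b_add1 b_add2)
  ultimately have "b x y + b y x = 0" by (simp add: alt)
  then show ?thesis by (simp add: eq_neg_iff_add_eq_0)
qed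

lemma finite_basisW:
  obtains BW where "finite BW" "W.independent BW" "W.span BW = UNIV" "card BW = m"
proof -
  obtain F where F: "finite F" "W.span F = UNIV" using W unfolding fin_dim_vs_def by auto
  obtain B where B: "B \<subseteq> UNIV" "W.independent B" "UNIV \<subseteq> W.span B" "card B = m"
    using W.basis_exists by blast
  have "finite B" using W.independent_span_bound[OF F(1) B(2)] F(2) by auto
  then show ?thesis using that B by auto
qed

lemma W_fin: "\<exists>F. finite F \<and> X \<subseteq> W.span F"
  using W unfolding fin_dim_vs_def by auto

lemma dimW_le: "W.dim X \<le> m"
proof -
  obtain F where F: "finite F" "W.span F = UNIV" using W unfolding fin_dim_vs_def by auto
  show ?thesis using W.dim_mono_gen[of X UNIV F] F by auto
qed

lemma perp_dim:
  assumes R: "W.subspace R"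
  shows "W.dim {w. \<forall>r\<in>R. b r w = 0} + W.dim R \<le> m"
proof -
  define Rp where "Rp = {w. \<forall>r\<in>R. b r w = 0}"
  obtain F where F: "finite F" "W.span F = UNIV" using W unfolding fin_dim_vs_def by auto
  obtain BR where BR: "BR \<subseteq> R" "W.independent BR" "R \<subseteq> W.span BR" "card BR = W.dim R"
    using W.basis_exists by blast
  obtain BW where BW: "BR \<subseteq> BW" "BW \<subseteq> UNIV" "W.independent BW" "UNIV \<subseteq> W.span BW"
    using W.maximal_independent_subset_extend[OF _ BR(2), of UNIV] by blast
  have fBW: "finite BW" using W.independent_span_bound[OF F(1) BW(3)] F(2) by auto
  have cBW: "card BW = m" using W.basis_card_eq_dim[OF BW(2) BW(4) BW(3)] .
  have fBR: "finite BR" using fBW BW(1) finite_subset by blast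
  interpret M: vector_space "hom_scale ((*) :: 'f \<Rightarrow> 'f \<Rightarrow> 'f) :: 'f \<Rightarrow> ('w \<Rightarrow> 'f) \<Rightarrow> _"
    by (rule vector_space_hom_scale[OF vector_space_mult])
  interpret P: vector_space_pair scaleW "hom_scale ((*) :: 'f \<Rightarrow> 'f \<Rightarrow> 'f) :: 'f \<Rightarrow> ('w \<Rightarrow> 'f) \<Rightarrow> _"
    by unfold_locales
  define \<Phi> where "\<Phi> w = (\<lambda>e. if e \<in> BW then b e w else 0)" for w
  have lin: "Vector_Spaces.linear scaleW (hom_scale (*)) \<Phi>"
    unfolding Vector_Spaces.linear_iff
    by (auto simp: W.vector_space_axioms M.vector_space_axioms \<Phi>_def hom_scale_def fun_eq_iff b_add2 b_scale2)
  have inj: "inj_on \<Phi> (W.span Rp)"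
  proof (rule inj_onI)
    fix x y assume "\<Phi> x = \<Phi> y"
    then have "\<Phi> (x - y) = 0" using P.linear_diff[OF lin] by simp
    then have z: "b e (x - y) = 0" if "e \<in> BW" for e
      using that unfolding \<Phi>_def by (metis (mono_tags, lifting) zero_fun_def)
    have "b e (x - y) = 0" for e
    proof -
      have "e \<in> W.span BW" using BW(4) by auto
      interpret Q: vector_space_pair scaleW "(*) :: 'f \<Rightarrow> 'f \<Rightarrow> 'f"
        by (simp add: vector_space_pair.intro W.vector_space_axioms vector_space_mult)
      show ?thesis using Q.linear_eq_0_on_span[OF lin1[of "x - y"]] z \<open>e \<in> W.span BW\<close> by blast
    qed
    then have "x - y = 0" using nondeg b_skew by (metis neg_equal_0_iff_equal)
    then show "x = y" by simp
  qed
  have d1: "M.dim (\<Phi> ` Rp) = W.dim Rp" using P.dim_image_eq_gen[OF lin inj] .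
  define \<delta> where "\<delta> e = (\<lambda>x. if x = e then (1::'f) else 0)" for e :: 'w
  have sub: "\<Phi> ` Rp \<subseteq> M.span (\<delta> ` (BW - BR))"
  proof
    fix g assume "g \<in> \<Phi> ` Rp"
    then obtain w where w: "w \<in> Rp" "g = \<Phi> w" by auto
    have "g = (\<Sum>e\<in>BW - BR. hom_scale (*) (b e w) (\<delta> e))"
    proof
      fix x
      have "(\<Sum>e\<in>BW - BR. hom_scale (*) (b e w) (\<delta> e)) x = (\<Sum>e\<in>BW - BR. b e w * \<delta> e x)"
        by (simp add: hom_scale_def sum_fun_apply) 
      also have "\<dots> = (if x \<in> BW - BR then b x w else 0)"
        using fBW by (simp add: \<delta>_def if_distrib[of "\<lambda>z. _ * z"] sum.delta cong: if_cong)
      also have "\<dots> = g x" using w BR(1) unfolding \<Phi>_def Rp_def by auto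
      finally show "g x = (\<Sum>e\<in>BW - BR. hom_scale (*) (b e w) (\<delta> e)) x" by simp
    qed
    also have "\<dots> \<in> M.span (\<delta> ` (BW - BR))"
      by (intro M.span_sum M.span_scale M.span_base) auto
    finally show "g \<in> M.span (\<delta> ` (BW - BR))" .
  qed
  have "M.dim (\<Phi> ` Rp) \<le> card (\<delta> ` (BW - BR))"
    using M.dim_le_card[OF sub] fBW by simp
  also have "\<dots> \<le> card (BW - BR)" using card_image_le fBW by blast
  also have "\<dots> = m - W.dim R" using card_Diff_subset[OF fBR BW(1)] cBW BR(4) by simp
  finally have "W.dim Rp \<le> m - W.dim R" using d1 by simp
  moreover have "W.dim R \<le> m" using dimW_le .
  ultimately show ?thesis unfolding Rp_def by simp
qed

end

definition delta :: "'a \<Rightarrow> 'w::zero \<Rightarrow> 'a \<Rightarrow> 'w" where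
  "delta e r = (\<lambda>x. if x = e then r else 0)"

definition Tsp :: "'a set \<Rightarrow> 'w::zero set \<Rightarrow> ('a \<Rightarrow> 'w) set" where
  "Tsp S L = {h. (\<forall>e. e \<notin> S \<longrightarrow> h e = 0) \<and> (\<forall>e\<in>S. h e \<in> L)}"

context sympl begin

lemma H_vs: "vector_space (hom_scale scaleW :: 'f \<Rightarrow> ('a \<Rightarrow> 'w) \<Rightarrow> _)"
  by (rule vector_space_hom_scale[OF W.vector_space_axioms])

lemma delta_lin: "Vector_Spaces.linear scaleW (hom_scale scaleW) (delta e)"
  unfolding Vector_Spaces.linear_iff
  by (auto simp: W.vector_space_axioms H_vs delta_def hom_scale_def fun_eq_iff)

lemma Tsp_subspace:
  assumes "W.subspace L"
  shows "module.subspace (hom_scale scaleW) (Tsp S L)"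
proof -
  interpret H: vector_space "hom_scale scaleW :: 'f \<Rightarrow> ('a \<Rightarrow> 'w) \<Rightarrow> _" by (rule H_vs)
  show ?thesis using assms unfolding H.subspace_def W.subspace_def Tsp_def
    by (auto simp: hom_scale_def)
qed

lemma Tsp_span:
  assumes S: "finite S" and L: "W.subspace L"
  shows "\<exists>F. finite F \<and> card F \<le> card S * W.dim L \<and>
     Tsp S L \<subseteq> module.span (hom_scale scaleW) (F :: ('a \<Rightarrow> 'w) set)"
proof -
  interpret H: vector_space "hom_scale scaleW :: 'f \<Rightarrow> ('a \<Rightarrow> 'w) \<Rightarrow> _" by (rule H_vs)
  interpret P: vector_space_pair scaleW "hom_scale scaleW :: 'f \<Rightarrow> ('a \<Rightarrow> 'w) \<Rightarrow> _"
    by unfold_locales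
  obtain BL where BL: "BL \<subseteq> L" "W.independent BL" "L \<subseteq> W.span BL" "card BL = W.dim L"
    using W.basis_exists by blast
  obtain G where G: "finite G" "W.span G = UNIV" using W unfolding fin_dim_vs_def by auto
  have fBL: "finite BL" using W.independent_span_bound[OF G(1) BL(2)] G(2) by auto
  define F where "F = (\<lambda>(e,r). delta e r) ` (S \<times> BL)"
  have "finite F" using S fBL F_def by auto
  moreover have "card F \<le> card S * W.dim L"
    using card_image_le[of "S \<times> BL" "\<lambda>(e,r). delta e r"] S fBL BL(4) card_cartesian_product
    unfolding F_def by (metis finite_cartesian_product)
  moreover have "Tsp S L \<subseteq> H.span F"
  proof
    fix h assume h: "h \<in> Tsp S L"
    have "h = (\<Sum>e\<in>S. delta e (h e))"
    proof
      fix x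
      have "(\<Sum>e\<in>S. delta e (h e)) x = (\<Sum>e\<in>S. if x = e then h e else 0)"
        by (simp add: sum_fun_apply delta_def)
      also have "\<dots> = (if x \<in> S then h x else 0)" using S by (simp add: sum.delta)
      also have "\<dots> = h x" using h unfolding Tsp_def by auto
      finally show "h x = (\<Sum>e\<in>S. delta e (h e)) x" by simp
    qed
    also have "\<dots> \<in> H.span F"
    proof (rule H.span_sum)
      fix e assume e: "e \<in> S"
      have "h e \<in> W.span BL" using h e BL(3) unfolding Tsp_def by auto
      then have "delta e (h e) \<in> delta e ` W.span BL" by auto
      also have "\<dots> = H.span (delta e ` BL)" using P.linear_span_image[OF delta_lin] by simp
      also have "\<dots> \<subseteq> H.span F" using e by (intro H.span_mono) (auto simp: F_def)
      finally show "delta e (h e) \<in> H.span F" .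
    qed
    finally show "h \<in> H.span F" .
  qed
  ultimately show ?thesis by blast
qed

lemma Tsp_dim:
  assumes S: "finite S" and L: "W.subspace L"
  shows "vector_space.dim (hom_scale scaleW) (Tsp S L :: ('a \<Rightarrow> 'w) set) \<le> card S * W.dim L"
proof -
  interpret H: vector_space "hom_scale scaleW :: 'f \<Rightarrow> ('a \<Rightarrow> 'w) \<Rightarrow> _" by (rule H_vs)
  obtain F :: "('a \<Rightarrow> 'w) set" where F: "finite F" "card F \<le> card S * W.dim L" "Tsp S L \<subseteq> H.span F"
    using Tsp_span[OF S L] by blast
  show ?thesis using H.dim_le_card[OF F(3) F(1)] F(2) by simp
qed

definition good :: "'a set \<Rightarrow> ('a \<Rightarrow> 'w) set \<Rightarrow> bool" where
  "good S X \<longleftrightarrow> module.subspace (hom_scale scaleW) X \<and> X \<subseteq> Tsp S UNIV \<and>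
     (\<forall>h\<in>X. \<forall>e\<in>S. \<forall>e'\<in>S. b (h e) (h e') = 0)"

lemma polar:
  assumes g: "good S X" and h: "h \<in> X" "g \<in> X" and e: "e \<in> S" "e' \<in> S"
  shows "b (h e) (g e') = - b (g e) (h e')"
proof -
  interpret H: vector_space "hom_scale scaleW :: 'f \<Rightarrow> ('a \<Rightarrow> 'w) \<Rightarrow> _" by (rule H_vs)
  have X: "H.subspace X" using g good_def by auto
  have "h + g \<in> X" using H.subspace_add[OF X h] .
  then have "b ((h + g) e) ((h + g) e') = 0" using g e unfolding good_def by blast
  moreover have "b (h e) (h e') = 0" "b (g e) (g e') = 0" using g e h unfolding good_def by blast+
  ultimately have "b (h e) (g e') + b (g e) (h e') = 0" by (simp add: b_add1 b_add2 add.commute)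
  then show ?thesis by (simp add: eq_neg_iff_add_eq_0)
qed

end

context sympl begin

lemma b_span_zero1:
  assumes "\<And>g. g \<in> G \<Longrightarrow> b g w = 0" and "r \<in> W.span G"
  shows "b r w = 0"
proof -
  interpret Q: vector_space_pair scaleW "(*) :: 'f \<Rightarrow> 'f \<Rightarrow> 'f"
    by (simp add: vector_space_pair.intro W.vector_space_axioms vector_space_mult)
  show ?thesis using Q.linear_eq_0_on_span[OF lin1[of w]] assms by blast
qed

lemma upd_lin: "Vector_Spaces.linear (hom_scale scaleW) (hom_scale scaleW) (\<lambda>h::'a \<Rightarrow> 'w. h(a := 0))"
  unfolding Vector_Spaces.linear_iff
  by (auto simp: H_vs hom_scale_def fun_eq_iff)

lemma ev_lin: "Vector_Spaces.linear (hom_scale scaleW) scaleW (\<lambda>h::'a \<Rightarrow> 'w. h a)"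
  unfolding Vector_Spaces.linear_iff
  by (auto simp: H_vs W.vector_space_axioms hom_scale_def)

lemma step:
  fixes X :: "('a \<Rightarrow> 'w) set"
  assumes S0: "finite S0" and a: "a \<notin> S0" and g: "good (insert a S0) X"
  defines "P \<equiv> (\<lambda>h. h(a := 0)) ` X" and "K \<equiv> {h\<in>X. h(a:=0) = 0}"
    and "R \<equiv> W.span {h e | h e. h \<in> X \<and> e \<in> S0}"
  shows "good S0 P"
    and "vector_space.dim (hom_scale scaleW) X \<le> vector_space.dim (hom_scale scaleW) P + vector_space.dim (hom_scale scaleW) K"
    and "vector_space.dim (hom_scale scaleW) K + W.dim R \<le> m"
    and "P \<subseteq> Tsp S0 R"
    and "vector_space.dim (hom_scale scaleW) P \<le> card S0 * W.dim R"
proof -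
  interpret H: vector_space "hom_scale scaleW :: 'f \<Rightarrow> ('a \<Rightarrow> 'w) \<Rightarrow> _" by (rule H_vs)
  interpret HH: vector_space_pair "hom_scale scaleW :: 'f \<Rightarrow> ('a \<Rightarrow> 'w) \<Rightarrow> _" "hom_scale scaleW :: 'f \<Rightarrow> ('a \<Rightarrow> 'w) \<Rightarrow> _"
    by unfold_locales
  interpret HW: vector_space_pair "hom_scale scaleW :: 'f \<Rightarrow> ('a \<Rightarrow> 'w) \<Rightarrow> _" scaleW
    by unfold_locales
  have X: "H.subspace X" and XT: "X \<subseteq> Tsp (insert a S0) UNIV"
    and sing: "\<And>h e e'. h \<in> X \<Longrightarrow> e \<in> insert a S0 \<Longrightarrow> e' \<in> insert a S0 \<Longrightarrow> b (h e) (h e') = 0"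
    using g unfolding good_def by auto
  have out: "h e = 0" if "h \<in> X" "e \<notin> insert a S0" for h e
    using XT that unfolding Tsp_def by auto
  obtain FX :: "('a \<Rightarrow> 'w) set" where FX: "finite FX" "Tsp (insert a S0) UNIV \<subseteq> H.span FX"
    using Tsp_span[OF _ W.subspace_UNIV, of "insert a S0"] S0 by auto
  have XF: "X \<subseteq> H.span FX" using XT FX by auto
  show goodP: "good S0 P"
    unfolding good_def
  proof (intro conjI)
    show "H.subspace P" unfolding P_def using HH.linear_subspace_image[OF upd_lin X] .
    show "P \<subseteq> Tsp S0 UNIV" unfolding P_def Tsp_def using out by auto
    show "\<forall>h\<in>P. \<forall>e\<in>S0. \<forall>e'\<in>S0. b (h e) (h e') = 0"
      unfolding P_def using sing a by auto
  qed
  have Keq: "K = X \<inter> {h. h(a:=0) = 0}" unfolding K_def by blast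
  have Ksub: "H.subspace K" unfolding Keq
    by (rule H.subspace_inter[OF X HH.linear_subspace_kernel[OF upd_lin]])
  show dX: "H.dim X \<le> H.dim P + H.dim K"
    using HH.dim_le_image_kernel[OF upd_lin X XF FX(1)] unfolding P_def K_def .
  have Kz: "h e = 0" if "h \<in> K" "e \<noteq> a" for h e
  proof -
    have "(h(a:=0)) e = 0" using that K_def by simp
    thus ?thesis using that by simp
  qed
  have inj: "inj_on (\<lambda>h. h a) (H.span K)"
    unfolding H.span_eq_iff[THEN iffD2, OF Ksub] HW.linear_inj_on_iff_eq_0[OF ev_lin Ksub]
  proof (intro ballI impI)
    fix h assume "h \<in> K" "h a = 0"
    then show "h = 0" using Kz unfolding fun_eq_iff zero_fun_def by metis
  qed
  have dK: "W.dim ((\<lambda>h. h a) ` K) = H.dim K" using HW.dim_image_eq_gen[OF ev_lin inj] .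
  have Rsub: "W.subspace R" unfolding R_def by simp
  have KR: "(\<lambda>h. h a) ` K \<subseteq> {w. \<forall>r\<in>R. b r w = 0}"
  proof safe
    fix h r assume h: "h \<in> K" and r: "r \<in> R"
    show "b r (h a) = 0"
    proof (rule b_span_zero1[OF _ r[unfolded R_def]])
      fix v assume "v \<in> {h e |h e. h \<in> X \<and> e \<in> S0}"
      then obtain g e where v: "v = g e" "g \<in> X" "e \<in> S0" by auto
      have hX: "h \<in> X" using h K_def by auto
      have "b (g e) (h a) = - b (h e) (g a)" using polar[OF g v(2) hX] v(3) by auto
      moreover have "e \<noteq> a" using v(3) a by blast
      then have "h e = 0" using Kz[OF h] by blast
      ultimately show "b v (h a) = 0" using v by simp
    qed
  qed
  obtain BW where BW: "finite BW" "W.span BW = UNIV" using W unfolding fin_dim_vs_def by auto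
  have "W.dim ((\<lambda>h. h a) ` K) \<le> W.dim {w. \<forall>r\<in>R. b r w = 0}"
    using W.dim_mono_gen[OF KR _ BW(1)] BW(2) by auto
  then show "H.dim K + W.dim R \<le> m" using perp_dim[OF Rsub] dK by simp
  show PT: "P \<subseteq> Tsp S0 R"
  proof
    fix p assume "p \<in> P"
    then obtain h where h: "h \<in> X" "p = h(a := 0)" unfolding P_def by auto
    have "p e = 0" if "e \<notin> S0" for e using h out that by auto
    moreover have "p e \<in> R" if "e \<in> S0" for e
    proof -
      have "p e = h e" using h that a by auto
      also have "h e \<in> R" unfolding R_def using h that by (intro W.span_base) auto
      finally show ?thesis .
    qed
    ultimately show "p \<in> Tsp S0 R" unfolding Tsp_def by auto
  qed
  obtain FP :: "('a \<Rightarrow> 'w) set" where FP: "finite FP" "card FP \<le> card S0 * W.dim R" "Tsp S0 R \<subseteq> H.span FP"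
    using Tsp_span[OF S0 Rsub] by blast
  have "H.dim P \<le> H.dim (Tsp S0 R)" using H.dim_mono_gen[OF PT FP(3) FP(1)] .
  also have "\<dots> \<le> card S0 * W.dim R" using Tsp_dim[OF S0 Rsub] .
  finally show "H.dim P \<le> card S0 * W.dim R" .
qed

end

context sympl begin

lemma bound:
  fixes X :: "('a \<Rightarrow> 'w) set"
  assumes "finite S" "good S X" "2 \<le> card S"
  shows "2 * vector_space.dim (hom_scale scaleW) X \<le> card S * m"
  using assms
proof (induction S arbitrary: X rule: finite_induct)
  case empty
  then show ?case by simp
next
  case (insert a S0)
  interpret H: vector_space "hom_scale scaleW :: 'f \<Rightarrow> ('a \<Rightarrow> 'w) \<Rightarrow> _" by (rule H_vs)
  define P where "P \<equiv> (\<lambda>h. h(a := 0)) ` X"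
  define K where "K \<equiv> {h\<in>X. h(a:=0) = 0}"
  define R where "R \<equiv> W.span {h e | h e. h \<in> X \<and> e \<in> S0}"
  note st = step[OF insert(1,2,4), folded P_def K_def R_def]
  have cS: "card (insert a S0) = Suc (card S0)" using insert by simp
  show ?case
  proof (cases "card S0 \<ge> 2")
    case False
    then have "card S0 = 1" using insert(5) cS by simp
    then show ?thesis using st(2,3,5) cS by simp
  next
    case True
    have IH: "2 * H.dim P \<le> card S0 * m" using insert.IH[OF st(1) True] .
    show ?thesis
    proof (cases "2 * W.dim R \<le> m")
      case True
      obtain k where k: "card S0 = Suc k" using \<open>2 \<le> card S0\<close> by (cases "card S0") auto
      have A: "2 * (k * W.dim R) \<le> k * m" using mult_le_mono2[OF True, of k] by (simp add: algebra_simps)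
      have B: "H.dim P \<le> W.dim R + k * W.dim R" using st(5) k by simp
      have C: "card (insert a S0) * m = 2 * m + k * m" using cS k by simp
      show ?thesis unfolding C using A B st(2,3) by linarith
    next
      case False
      then show ?thesis using st(2,3) IH cS by (simp add: algebra_simps)
    qed
  qed
qed

end

lemma card_ge1_ex: "1 \<le> card A \<Longrightarrow> \<exists>x. x \<in> A"
  by (metis card.empty all_not_in_conv not_one_le_zero)

context sympl begin

lemma eq_step:
  fixes X :: "('a \<Rightarrow> 'w) set"
  assumes S0: "finite S0" and a: "a \<notin> S0" and g: "good (insert a S0) X" and c2: "2 \<le> card S0"
    and eq: "2 * vector_space.dim (hom_scale scaleW) X = (card S0 + 1) * m"
  defines "R \<equiv> W.span {h e | h e. h \<in> X \<and> e \<in> S0}"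
  shows "2 * W.dim R = m" "\<forall>x\<in>R. \<forall>y\<in>R. b x y = 0"
    "\<forall>e\<in>S0. \<forall>r\<in>R. \<exists>h\<in>X. h e = r" "\<forall>h\<in>X. \<forall>e\<in>S0. h e \<in> R"
proof -
  interpret H: vector_space "hom_scale scaleW :: 'f \<Rightarrow> ('a \<Rightarrow> 'w) \<Rightarrow> _" by (rule H_vs)
  define P where "P \<equiv> (\<lambda>h. h(a := 0)) ` X"
  define K where "K \<equiv> {h\<in>X. h(a:=0) = 0}"
  note st = step[OF S0 a g, folded P_def K_def R_def]
  have IH: "2 * H.dim P \<le> card S0 * m" using bound[OF S0 st(1) c2] .
  obtain k where k: "card S0 = Suc k" "k \<ge> 1" using c2 by (cases "card S0") auto
  have C0: "(card S0 + 1) * m = card S0 * m + m" by simp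
  have r1: "2 * W.dim R \<le> m" using IH st(2,3) eq C0 by linarith
  have r2: "m \<le> 2 * W.dim R"
  proof (rule ccontr)
    assume "\<not> m \<le> 2 * W.dim R"
    then have "k * (2 * W.dim R) < k * m" using k(2) by simp
    then have A: "2 * (k * W.dim R) < k * m" by (simp add: algebra_simps)
    have B: "H.dim P \<le> W.dim R + k * W.dim R" using st(5) k by simp
    have C: "(card S0 + 1) * m = 2 * m + k * m" using k by simp
    show False using A B C st(2,3) eq by linarith
  qed
  show mR: "2 * W.dim R = m" using r1 r2 by simp
  have dP: "card S0 * W.dim R \<le> H.dim P"
  proof -
    have C: "(card S0 + 1) * m = card S0 * (2 * W.dim R) + m" using mR by simp
    show ?thesis using C st(2,3) eq mR by linarith
  qed
  have Rsub: "W.subspace R" unfolding R_def by simp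
  obtain FP :: "('a \<Rightarrow> 'w) set" where FP: "finite FP" "card FP \<le> card S0 * W.dim R" "Tsp S0 R \<subseteq> H.span FP"
    using Tsp_span[OF S0 Rsub] by blast
  have Psub: "H.subspace P" using st(1) unfolding good_def by auto
  have TP: "Tsp S0 R \<subseteq> P"
    using H.subspace_eq_by_dim[OF Psub st(4) FP(3) FP(1)] Tsp_dim[OF S0 Rsub] dP by linarith
  have delta_T: "delta e r \<in> Tsp S0 R" if "e \<in> S0" "r \<in> R" for e r
    using that W.subspace_0[OF Rsub] unfolding Tsp_def delta_def by auto
  show "\<forall>x\<in>R. \<forall>y\<in>R. b x y = 0"
  proof (intro ballI)
    fix x y assume xy: "x \<in> R" "y \<in> R"
    obtain e1 where e1: "e1 \<in> S0" using c2 by fastforce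
    have "card (S0 - {e1}) \<ge> 1" using c2 e1 S0 by simp
    then obtain e2 where e2: "e2 \<in> S0" "e2 \<noteq> e1" using card_ge1_ex by blast
    define h where "h = delta e1 x + delta e2 y"
    have "h \<in> Tsp S0 R"
      unfolding h_def using H.subspace_add[OF Tsp_subspace[OF Rsub] delta_T[OF e1 xy(1)] delta_T[OF e2(1) xy(2)]] .
    then have "h \<in> P" using TP by auto
    then have "b (h e1) (h e2) = 0" using st(1) e1 e2 unfolding good_def by blast
    moreover have "h e1 = x" "h e2 = y" using e2(2) unfolding h_def delta_def by auto
    ultimately show "b x y = 0" by simp
  qed
  show "\<forall>e\<in>S0. \<forall>r\<in>R. \<exists>h\<in>X. h e = r"
  proof (intro ballI)
    fix e r assume er: "e \<in> S0" "r \<in> R"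
    then have "delta e r \<in> P" using delta_T TP by auto
    then obtain h where h: "h \<in> X" "delta e r = h(a := 0)" unfolding P_def by auto
    have "h e = (h(a := 0)) e" using er a by auto
    also have "\<dots> = r" using h(2)[symmetric] by (simp add: delta_def)
    finally show "\<exists>h\<in>X. h e = r" using h(1) by blast
  qed
  show "\<forall>h\<in>X. \<forall>e\<in>S0. h e \<in> R" unfolding R_def by (auto intro: W.span_base)
qed

lemma eq_main:
  fixes X :: "('a \<Rightarrow> 'w) set"
  assumes S: "finite S" and c3: "3 \<le> card S" and g: "good S X"
    and eq: "2 * vector_space.dim (hom_scale scaleW) X = card S * m"
  shows "\<exists>L. W.subspace L \<and> (\<forall>x\<in>L. \<forall>y\<in>L. b x y = 0) \<and> 2 * W.dim L = m \<and> X = Tsp S L"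
proof -
  interpret H: vector_space "hom_scale scaleW :: 'f \<Rightarrow> ('a \<Rightarrow> 'w) \<Rightarrow> _" by (rule H_vs)
  define Rf where "Rf a' = W.span {h e | h e. h \<in> X \<and> e \<in> S - {a'}}" for a'
  have E: "2 * W.dim (Rf a') = m \<and> (\<forall>x\<in>Rf a'. \<forall>y\<in>Rf a'. b x y = 0) \<and>
    (\<forall>e\<in>S - {a'}. \<forall>r\<in>Rf a'. \<exists>h\<in>X. h e = r) \<and> (\<forall>h\<in>X. \<forall>e\<in>S - {a'}. h e \<in> Rf a')"
    if a': "a' \<in> S" for a'
  proof -
    have ins: "insert a' (S - {a'}) = S" using a' by auto
    have cs: "card (S - {a'}) + 1 = card S" using a' S c3 by simp
    have "2 \<le> card (S - {a'})" using cs c3 by simp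
    note es = eq_step[of "S - {a'}" a' X, unfolded ins cs, OF _ _ g this eq, folded Rf_def]
    show ?thesis using es S by auto
  qed
  obtain a where a: "a \<in> S" using c3 by fastforce
  have "card (S - {a}) \<ge> 2" using c3 a S by simp
  then obtain c where c: "c \<in> S" "c \<noteq> a" using card_ge1_ex[of "S - {a}"] by auto
  have "card (S - {a, c}) \<ge> 1" using c3 a c S by (simp add: card_Diff_subset)
  then obtain d where d: "d \<in> S" "d \<noteq> a" "d \<noteq> c" using card_ge1_ex[of "S - {a, c}"] by auto
  have sub: "Rf x \<subseteq> Rf y" if xy: "x \<in> S" "y \<in> S" "d \<noteq> x" "d \<noteq> y" for x y
  proof
    fix r assume r: "r \<in> Rf x"
    then obtain h where h: "h \<in> X" "h d = r" using E[OF xy(1)] d xy by blast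
    show "r \<in> Rf y" using E[OF xy(2)] h d xy by auto
  qed
  have Req: "Rf a = Rf c" using sub[OF a c(1)] sub[OF c(1) a] d by blast
  define L where "L = Rf a"
  have Lsub: "W.subspace L" unfolding L_def Rf_def by simp
  have inL: "h e \<in> L" if "h \<in> X" "e \<in> S" for h e
  proof (cases "e = a")
    case True
    then show ?thesis using E[OF c(1)] that c(2) Req L_def by auto
  next
    case False
    then show ?thesis using E[OF a] that L_def by auto
  qed
  have XT: "X \<subseteq> Tsp S L" using g inL unfolding good_def Tsp_def by auto
  obtain FT :: "('a \<Rightarrow> 'w) set" where FT: "finite FT" "card FT \<le> card S * W.dim L" "Tsp S L \<subseteq> H.span FT"
    using Tsp_span[OF S Lsub] by blast
  have Xsub: "H.subspace X" using g unfolding good_def by auto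
  have mL: "2 * W.dim L = m" using E[OF a] L_def by auto
  have "card S * m = 2 * (card S * W.dim L)" using mL by (simp add: algebra_simps)
  then have "H.dim (Tsp S L) \<le> H.dim X" using Tsp_dim[OF S Lsub] eq by linarith
  then have "Tsp S L \<subseteq> X" using H.subspace_eq_by_dim[OF Xsub XT FT(3) FT(1)] by simp
  then have "X = Tsp S L" using XT by auto
  moreover have "\<forall>x\<in>L. \<forall>y\<in>L. b x y = 0" using E[OF a] L_def by auto
  ultimately show ?thesis using Lsub mL by blast
qed

end

theorem lemma12:
  fixes scaleU :: "'f::field \<Rightarrow> 'u::ab_group_add \<Rightarrow> 'u"
    and scaleW :: "'f \<Rightarrow> 'w::ab_group_add \<Rightarrow> 'w"
    and b :: "'w \<Rightarrow> 'w \<Rightarrow> 'f"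
    and V :: "('u \<Rightarrow> 'w) set"
  assumes U: "fin_dim_vs scaleU"
    and W: "fin_dim_vs scaleW"
    and dimU: "vector_space.dim scaleU (UNIV :: 'u set) > 1"
    and b: "symplectic_form scaleW b"
    and V_Hom: "V \<subseteq> Hom scaleU scaleW UNIV"
    and V_sub: "module.subspace (hom_scale scaleW) V"
    and V_sing: "\<forall>f\<in>V. totally_singular b (range f)"
  shows "2 * vector_space.dim (hom_scale scaleW) V
           \<le> vector_space.dim scaleU (UNIV :: 'u set) * vector_space.dim scaleW (UNIV :: 'w set)
    \<and> (vector_space.dim scaleU (UNIV :: 'u set) > 2 \<and>
         2 * vector_space.dim (hom_scale scaleW) V
           = vector_space.dim scaleU (UNIV :: 'u set) * vector_space.dim scaleW (UNIV :: 'w set)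
         \<longrightarrow> (\<exists>L. lagrangian scaleW b L \<and> V = Hom scaleU scaleW L))"
proof -
  interpret S: sympl scaleW b using W b by unfold_locales
  interpret U: vector_space scaleU using U unfolding fin_dim_vs_def by auto
  interpret H: vector_space "hom_scale scaleW :: 'f \<Rightarrow> ('u \<Rightarrow> 'w) \<Rightarrow> _" by (rule S.H_vs)
  interpret HH: vector_space_pair "hom_scale scaleW :: 'f \<Rightarrow> ('u \<Rightarrow> 'w) \<Rightarrow> _" "hom_scale scaleW :: 'f \<Rightarrow> ('u \<Rightarrow> 'w) \<Rightarrow> _"
    by unfold_locales
  interpret UW: vector_space_pair scaleU scaleW by unfold_locales
  obtain FU where FU: "finite FU" "U.span FU = UNIV" using U unfolding fin_dim_vs_def by auto
  obtain BU where BU: "BU \<subseteq> UNIV" "U.independent BU" "UNIV \<subseteq> U.span BU" "card BU = U.dim UNIV"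
    using U.basis_exists by blast
  have fBU: "finite BU" using U.independent_span_bound[OF FU(1) BU(2)] FU(2) by auto
  have spBU: "U.span BU = UNIV" using BU(3) by auto
  define \<Gamma> where "\<Gamma> f = (\<lambda>x. if x \<in> BU then f x else 0)" for f :: "'u \<Rightarrow> 'w"
  have Glin: "Vector_Spaces.linear (hom_scale scaleW) (hom_scale scaleW) \<Gamma>"
    unfolding Vector_Spaces.linear_iff
    by (auto simp: S.H_vs hom_scale_def fun_eq_iff \<Gamma>_def)
  have linV: "Vector_Spaces.linear scaleU scaleW f" if "f \<in> V" for f
    using V_Hom that unfolding Hom_def by auto
  have Geq: "f = g" if "Vector_Spaces.linear scaleU scaleW f" "Vector_Spaces.linear scaleU scaleW g" "\<Gamma> f = \<Gamma> g" for f g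
  proof
    fix x
    have "x \<in> U.span BU" using spBU by auto
    moreover have "f e = g e" if "e \<in> BU" for e using \<open>\<Gamma> f = \<Gamma> g\<close> that unfolding \<Gamma>_def fun_eq_iff by metis
    ultimately show "f x = g x" using UW.linear_eq_on[OF that(1,2)] by blast
  qed
  define X where "X = \<Gamma> ` V"
  have good: "S.good BU X"
    unfolding S.good_def
  proof (intro conjI)
    show "H.subspace X" unfolding X_def using HH.linear_subspace_image[OF Glin V_sub] .
    show "X \<subseteq> Tsp BU UNIV" unfolding X_def Tsp_def \<Gamma>_def by auto
    show "\<forall>h\<in>X. \<forall>e\<in>BU. \<forall>e'\<in>BU. b (h e) (h e') = 0"
      using V_sing unfolding X_def \<Gamma>_def totally_singular_def by auto
  qed
  have inj: "inj_on \<Gamma> (H.span V)"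
    unfolding H.span_eq_iff[THEN iffD2, OF V_sub]
    by (rule inj_onI) (use Geq linV in blast)
  have dX: "H.dim X = H.dim V" unfolding X_def using HH.dim_image_eq_gen[OF Glin inj] .
  have c2: "2 \<le> card BU" using dimU BU(4) by simp
  have part1: "2 * H.dim V \<le> U.dim UNIV * S.m"
    using S.bound[OF fBU good c2] dX BU(4) by simp
  have part2: "\<exists>L. lagrangian scaleW b L \<and> V = Hom scaleU scaleW L"
    if n3: "U.dim UNIV > 2" and eq: "2 * H.dim V = U.dim UNIV * S.m"
  proof -
    have c3: "3 \<le> card BU" using n3 BU(4) by simp
    obtain L where L: "S.W.subspace L" "\<forall>x\<in>L. \<forall>y\<in>L. b x y = 0" "2 * S.W.dim L = S.m" "X = Tsp BU L"
      using S.eq_main[OF fBU c3 good] eq dX BU(4) by auto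
    have lag: "lagrangian scaleW b L"
      unfolding lagrangian_def totally_singular_def using L by auto
    have "V \<subseteq> Hom scaleU scaleW L"
    proof
      fix f assume f: "f \<in> V"
      have vals: "f e \<in> L" if "e \<in> BU" for e
      proof -
        have "\<Gamma> f \<in> Tsp BU L" using f L(4) X_def by auto
        then show ?thesis using that unfolding Tsp_def \<Gamma>_def by auto
      qed
      have "range f \<subseteq> L"
      proof
        fix y assume "y \<in> range f"
        then obtain x where y: "y = f x" by auto
        have "f x \<in> f ` U.span BU" using spBU by auto
        also have "\<dots> = S.W.span (f ` BU)" using UW.linear_span_image[OF linV[OF f]] by simp
        also have "\<dots> \<subseteq> L" using vals L(1) by (intro S.W.span_minimal) auto
        finally show "y \<in> L" using y by simp
      qed
      then show "f \<in> Hom scaleU scaleW L" using linV[OF f] unfolding Hom_def by auto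
    qed
    moreover have "Hom scaleU scaleW L \<subseteq> V"
    proof
      fix \<phi> assume \<phi>: "\<phi> \<in> Hom scaleU scaleW L"
      then have "\<Gamma> \<phi> \<in> Tsp BU L" unfolding Hom_def Tsp_def \<Gamma>_def by auto
      then have "\<Gamma> \<phi> \<in> \<Gamma> ` V" using L(4) X_def by simp
      then obtain f where f: "f \<in> V" "\<Gamma> f = \<Gamma> \<phi>" by (metis imageE)
      have "f = \<phi>" using Geq[OF linV[OF f(1)] _ f(2)] \<phi> unfolding Hom_def by auto
      then show "\<phi> \<in> V" using f by simp
    qed
    ultimately show ?thesis using lag by blast
  qed
  show ?thesis using part1 part2 by blast
qed

end
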